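(* If $X$ is a locally finite simplicial set, then the ring $\mathbb Z^{(X)}$ is $s$-unital: for every finite family $\phi_1,\dots,\phi_n\in\mathbb Z^{(X)}$ there exists $\mu\in\mathbb Z^{(X)}$ with $\phi_i\mu=\mu\phi_i=\phi_i$ for all $i$.
   Context: $\mathbb Z^{\Delta^n}=\mathbb Z[t_0,\dots,t_n]/(t_0+\dots+t_n-1)$ forms a simplicial ring; $\mathbb Z^X=\hom_{\mathrm{sSet}}(X,\mathbb Z^{\Delta^\bullet})$ with pointwise multiplication; the support of $\phi$ is the simplicial subset generated by the simplices on which $\phi$ is nonzero; $\mathbb Z^{(X)}$ is the ideal of elements with finite support. $X$ is locally finite if every simplex is a face of only finitely many nondegenerate simplices (i.e. for each $\sigma$, finitely many nondegenerate $\tau$ with $\langle\tau\rangle\supset\langle\sigma\rangle$). *)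

theory Defs
  imports Main "HOL-Library.Poly_Mapping"
begin

text \<open>A morphism [m] \<rightarrow> [n] of the simplex category: a monotone map {0..m} \<rightarrow> {0..n}
  (represented by a function nat \<Rightarrow> nat, only its values on {0..m} matter).\<close>
definition mono_map :: "nat \<Rightarrow> nat \<Rightarrow> (nat \<Rightarrow> nat) \<Rightarrow> bool" where
  "mono_map m n \<theta> \<longleftrightarrow> (\<forall>i\<le>m. \<theta> i \<le> n) \<and> (\<forall>i j. i \<le> j \<longrightarrow> j \<le> m \<longrightarrow> \<theta> i \<le> \<theta> j)"

text \<open>A simplicial set: sets X n of n-simplices together with the contravariant action
  act m n \<theta> : X n \<rightarrow> X m of each monotone \<theta> : [m] \<rightarrow> [n].\<close>
definition simplicial_set ::
  "(nat \<Rightarrow> 'a set) \<Rightarrow> (nat \<Rightarrow> nat \<Rightarrow> (nat \<Rightarrow> nat) \<Rightarrow> 'a \<Rightarrow> 'a) \<Rightarrow> bool" where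
  "simplicial_set X act \<longleftrightarrow>
     (\<forall>m n \<theta> x. mono_map m n \<theta> \<longrightarrow> x \<in> X n \<longrightarrow> act m n \<theta> x \<in> X m) \<and>
     (\<forall>n x. x \<in> X n \<longrightarrow> act n n id x = x) \<and>
     (\<forall>l m n \<psi> \<theta> x. mono_map l m \<psi> \<longrightarrow> mono_map m n \<theta> \<longrightarrow> x \<in> X n \<longrightarrow>
        act l m \<psi> (act m n \<theta> x) = act l n (\<theta> \<circ> \<psi>) x) \<and>
     (\<forall>m n \<theta> \<theta>' x. mono_map m n \<theta> \<longrightarrow> (\<forall>i\<le>m. \<theta> i = \<theta>' i) \<longrightarrow> x \<in> X n \<longrightarrow>
        act m n \<theta> x = act m n \<theta>' x)"

definition simplices :: "(nat \<Rightarrow> 'a set) \<Rightarrow> (nat \<times> 'a) set" where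
  "simplices X = {(n, x). x \<in> X n}"

definition degenerate ::
  "(nat \<Rightarrow> 'a set) \<Rightarrow> (nat \<Rightarrow> nat \<Rightarrow> (nat \<Rightarrow> nat) \<Rightarrow> 'a \<Rightarrow> 'a) \<Rightarrow> nat \<Rightarrow> 'a \<Rightarrow> bool" where
  "degenerate X act n x \<longleftrightarrow>
     (\<exists>m<n. \<exists>\<theta> y. mono_map n m \<theta> \<and> y \<in> X m \<and> x = act n m \<theta> y)"

definition generated ::
  "(nat \<Rightarrow> nat \<Rightarrow> (nat \<Rightarrow> nat) \<Rightarrow> 'a \<Rightarrow> 'a) \<Rightarrow> nat \<times> 'a \<Rightarrow> (nat \<times> 'a) set" where
  "generated act \<sigma> = {(m, act m (fst \<sigma>) \<theta> (snd \<sigma>)) | m \<theta>. mono_map m (fst \<sigma>) \<theta>}"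

text \<open>Locally finite: every simplex is a face of only finitely many nondegenerate simplices,
  i.e. for each \<sigma> there are finitely many nondegenerate \<tau> with \<langle>\<tau>\<rangle> \<supseteq> \<langle>\<sigma>\<rangle>.\<close>
definition locally_finite ::
  "(nat \<Rightarrow> 'a set) \<Rightarrow> (nat \<Rightarrow> nat \<Rightarrow> (nat \<Rightarrow> nat) \<Rightarrow> 'a \<Rightarrow> 'a) \<Rightarrow> bool" where
  "locally_finite X act \<longleftrightarrow>
     (\<forall>\<sigma>\<in>simplices X. finite {\<tau>\<in>simplices X. \<not> degenerate X act (fst \<tau>) (snd \<tau>) \<and>
                                  generated act \<sigma> \<subseteq> generated act \<tau>})"

text \<open>Integer polynomials in the variables t_0, t_1, ... (monomials are exponent vectors).\<close>
type_synonym ipoly = "(nat \<Rightarrow>\<^sub>0 nat) \<Rightarrow>\<^sub>0 int"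

definition pvar :: "nat \<Rightarrow> ipoly" where
  "pvar i = Poly_Mapping.single (Poly_Mapping.single i 1) 1"

definition polys_upto :: "nat \<Rightarrow> ipoly set" where
  "polys_upto n = {p. \<forall>mon\<in>Poly_Mapping.keys p. \<forall>j\<in>Poly_Mapping.keys mon. j \<le> n}"

definition simplex_rel :: "nat \<Rightarrow> ipoly" where
  "simplex_rel n = (\<Sum>i\<le>n. pvar i) - 1"

text \<open>Equality in the quotient ring Z^{\<Delta>^n}: difference lies in the ideal (t_0+...+t_n-1).\<close>
definition delta_eq :: "nat \<Rightarrow> ipoly \<Rightarrow> ipoly \<Rightarrow> bool" where
  "delta_eq n p q \<longleftrightarrow> (\<exists>r\<in>polys_upto n. p - q = r * simplex_rel n)"

definition psubst :: "(nat \<Rightarrow> ipoly) \<Rightarrow> ipoly \<Rightarrow> ipoly" where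
  "psubst s p = (\<Sum>mon\<in>Poly_Mapping.keys p.
      of_int (Poly_Mapping.lookup p mon) *
      (\<Prod>j\<in>Poly_Mapping.keys mon. s j ^ Poly_Mapping.lookup mon j))"

definition delta_pull :: "nat \<Rightarrow> (nat \<Rightarrow> nat) \<Rightarrow> ipoly \<Rightarrow> ipoly" where
  "delta_pull m \<theta> p = psubst (\<lambda>j. \<Sum>i\<in>{i. i \<le> m \<and> \<theta> i = j}. pvar i) p"

text \<open>An element of Z^X = hom_sSet(X, Z^{\<Delta>^\<bullet>}), given by representatives
  \<phi> n x \<in> Z[t_0..t_n] of its components; two such are equal iff componentwise delta_eq.
  Multiplication is pointwise.\<close>
definition Zpow ::
  "(nat \<Rightarrow> 'a set) \<Rightarrow> (nat \<Rightarrow> nat \<Rightarrow> (nat \<Rightarrow> nat) \<Rightarrow> 'a \<Rightarrow> 'a) \<Rightarrow> (nat \<Rightarrow> 'a \<Rightarrow> ipoly) set" where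
  "Zpow X act = {\<phi>. (\<forall>n. \<forall>x\<in>X n. \<phi> n x \<in> polys_upto n) \<and>
      (\<forall>m n \<theta> x. mono_map m n \<theta> \<longrightarrow> x \<in> X n \<longrightarrow>
          delta_eq m (\<phi> m (act m n \<theta> x)) (delta_pull m \<theta> (\<phi> n x)))}"

definition support ::
  "(nat \<Rightarrow> 'a set) \<Rightarrow> (nat \<Rightarrow> nat \<Rightarrow> (nat \<Rightarrow> nat) \<Rightarrow> 'a \<Rightarrow> 'a) \<Rightarrow> (nat \<Rightarrow> 'a \<Rightarrow> ipoly) \<Rightarrow> (nat \<times> 'a) set" where
  "support X act \<phi> =
     (\<Union>\<sigma>\<in>{\<sigma>\<in>simplices X. \<not> delta_eq (fst \<sigma>) (\<phi> (fst \<sigma>) (snd \<sigma>)) 0}. generated act \<sigma>)"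

definition Zpow_fin ::
  "(nat \<Rightarrow> 'a set) \<Rightarrow> (nat \<Rightarrow> nat \<Rightarrow> (nat \<Rightarrow> nat) \<Rightarrow> 'a \<Rightarrow> 'a) \<Rightarrow> (nat \<Rightarrow> 'a \<Rightarrow> ipoly) set" where
  "Zpow_fin X act = {\<phi>\<in>Zpow X act.
      finite {\<sigma>\<in>support X act \<phi>. \<not> degenerate X act (fst \<sigma>) (snd \<sigma>)}}"

end

theory Submission
  imports Defs "HOL-Library.FuncSet"
begin


lemma pu_add: assumes "p \<in> polys_upto n" "q \<in> polys_upto n" shows "p + q \<in> polys_upto n"
proof -
  have "Poly_Mapping.keys (p+q) \<subseteq> Poly_Mapping.keys p \<union> Poly_Mapping.keys q" by (rule keys_add)
  then show ?thesis using assms unfolding polys_upto_def by blast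
qed

lemma pu_diff: assumes "p \<in> polys_upto n" "q \<in> polys_upto n" shows "p - q \<in> polys_upto n"
proof -
  have "Poly_Mapping.keys (p-q) \<subseteq> Poly_Mapping.keys p \<union> Poly_Mapping.keys q" by (rule keys_diff)
  then show ?thesis using assms unfolding polys_upto_def by blast
qed

lemma pu_mult: assumes pp: "p \<in> polys_upto n" and qq: "q \<in> polys_upto n" shows "p * q \<in> polys_upto n"
  unfolding polys_upto_def mem_Collect_eq
proof (intro ballI)
  fix mon j 
  assume mon: "mon \<in> Poly_Mapping.keys (p*q)" and j: "j \<in> Poly_Mapping.keys mon"
  have p: "\<forall>mon\<in>Poly_Mapping.keys p. \<forall>j\<in>Poly_Mapping.keys mon. j \<le> n" and q: "\<forall>mon\<in>Poly_Mapping.keys q. \<forall>j\<in>Poly_Mapping.keys mon. j \<le> n"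
    using pp qq by (auto simp: polys_upto_def)
  have "Poly_Mapping.keys (p*q) \<subseteq> {a + b | a b. a \<in> Poly_Mapping.keys p \<and> b \<in> Poly_Mapping.keys q}" by (rule keys_mult)
  with mon obtain a b where "mon = a + b" "a \<in> Poly_Mapping.keys p" "b \<in> Poly_Mapping.keys q" by blast
  moreover have "Poly_Mapping.keys (a+b) \<subseteq> Poly_Mapping.keys a \<union> Poly_Mapping.keys b" by (rule keys_add)
  ultimately show "j \<le> n" using j p q by blast
qed

lemma pu_zero: "0 \<in> polys_upto n" by (simp add: polys_upto_def)
lemma pu_one: "1 \<in> polys_upto n" by (simp add: polys_upto_def)
lemma pu_var: "i \<le> n \<Longrightarrow> pvar i \<in> polys_upto n" by (simp add: polys_upto_def pvar_def)
lemma pu_sum: "(\<And>i. i \<in> S \<Longrightarrow> f i \<in> polys_upto n) \<Longrightarrow> sum f S \<in> polys_upto n"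
  by (induction S rule: infinite_finite_induct) (auto simp: pu_zero pu_add)

lemma sum_pvar_lookup:
  assumes "finite S"
  shows "Poly_Mapping.lookup (\<Sum>i\<in>S. pvar i) mon = (if mon \<in> (\<lambda>i. Poly_Mapping.single i (1::nat)) ` S then 1 else 0)"
proof -
  have inj: "inj (\<lambda>i. Poly_Mapping.single i (1::nat))"
    by (rule injI) (metis lookup_single_eq lookup_single_not_eq one_neq_zero)
  have "Poly_Mapping.lookup (\<Sum>i\<in>S. pvar i) mon = (\<Sum>i\<in>S. if Poly_Mapping.single i 1 = mon then 1 else (0::int))"
    by (simp add: lookup_sum pvar_def lookup_single when_def eq_commute)
  also have "\<dots> = (if mon \<in> (\<lambda>i. Poly_Mapping.single i (1::nat)) ` S then 1 else 0)"
  proof (cases "mon \<in> (\<lambda>i. Poly_Mapping.single i (1::nat)) ` S")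
    case True
    then obtain i0 where i: "i0 \<in> S" "mon = Poly_Mapping.single i0 1" by auto
    have "(\<Sum>i\<in>S. if Poly_Mapping.single i 1 = mon then 1 else (0::int)) = (\<Sum>i\<in>S. if i = i0 then 1 else 0)"
      using inj i(2) by (intro sum.cong) (auto dest: injD)
    then show ?thesis using True i assms by simp
  next
    case False
    then show ?thesis by (auto intro!: sum.neutral)
  qed
  finally show ?thesis .
qed

lemma psubst_sum_pvar:
  assumes "finite S"
  shows "psubst s (\<Sum>i\<in>S. pvar i) = (\<Sum>i\<in>S. s i)"
proof -
  have inj: "inj (\<lambda>i. Poly_Mapping.single i (1::nat))"
    by (rule injI) (metis lookup_single_eq lookup_single_not_eq one_neq_zero)
  have k: "Poly_Mapping.keys (\<Sum>i\<in>S. pvar i) = (\<lambda>i. Poly_Mapping.single i (1::nat)) ` S"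
    using sum_pvar_lookup[OF assms] by (auto simp: in_keys_iff split: if_splits)
  have "psubst s (\<Sum>i\<in>S. pvar i) = (\<Sum>mon\<in>(\<lambda>i. Poly_Mapping.single i (1::nat)) ` S.
      of_int (Poly_Mapping.lookup (\<Sum>i\<in>S. pvar i) mon) *
      (\<Prod>j\<in>Poly_Mapping.keys mon. s j ^ Poly_Mapping.lookup mon j))"
    unfolding psubst_def k ..
  also have "\<dots> = (\<Sum>i\<in>S. of_int (Poly_Mapping.lookup (\<Sum>i\<in>S. pvar i) (Poly_Mapping.single i 1)) *
      (\<Prod>j\<in>Poly_Mapping.keys (Poly_Mapping.single i (1::nat)). s j ^ Poly_Mapping.lookup (Poly_Mapping.single i 1) j))"
    by (rule sum.reindex_cong[OF inj_on_subset[OF inj subset_UNIV] refl]) simp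
  also have "\<dots> = (\<Sum>i\<in>S. s i)"
    by (rule sum.cong) (auto simp: sum_pvar_lookup[OF assms])
  finally show ?thesis .
qed




lemma mono_comp: "mono_map l m \<psi> \<Longrightarrow> mono_map m n \<theta> \<Longrightarrow> mono_map l n (\<theta> \<circ> \<psi>)"
  unfolding mono_map_def by auto

lemma mono_const: "i \<le> n \<Longrightarrow> mono_map k n (\<lambda>_. i)"
  unfolding mono_map_def by auto

lemma mono_id: "mono_map n n id"
  unfolding mono_map_def by auto

lemma gen_iff: "\<tau> \<in> generated act (n,x) \<longleftrightarrow> (\<exists>\<theta>. mono_map (fst \<tau>) n \<theta> \<and> snd \<tau> = act (fst \<tau>) n \<theta> x)"
  unfolding generated_def by (cases \<tau>) auto

lemma simplices_iff: "(n,x) \<in> simplices X \<longleftrightarrow> x \<in> X n"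
  unfolding simplices_def by auto

context
  fixes X :: "nat \<Rightarrow> 'a set" and act :: "nat \<Rightarrow> nat \<Rightarrow> (nat \<Rightarrow> nat) \<Rightarrow> 'a \<Rightarrow> 'a"
  assumes ss: "simplicial_set X act"
begin

lemma s_act: "mono_map m n \<theta> \<Longrightarrow> x \<in> X n \<Longrightarrow> act m n \<theta> x \<in> X m"
  using ss unfolding simplicial_set_def by blast
lemma s_id: "x \<in> X n \<Longrightarrow> act n n id x = x"
  using ss unfolding simplicial_set_def by blast
lemma s_comp: "mono_map l m \<psi> \<Longrightarrow> mono_map m n \<theta> \<Longrightarrow> x \<in> X n \<Longrightarrow>
        act l m \<psi> (act m n \<theta> x) = act l n (\<theta> \<circ> \<psi>) x"
  using ss unfolding simplicial_set_def by blast
lemma s_cong: "mono_map m n \<theta> \<Longrightarrow> (\<And>i. i\<le>m \<Longrightarrow> \<theta> i = \<theta>' i) \<Longrightarrow> x \<in> X n \<Longrightarrow>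
        act m n \<theta> x = act m n \<theta>' x"
  using ss unfolding simplicial_set_def by blast

lemma gen_simplices: "x \<in> X n \<Longrightarrow> generated act (n,x) \<subseteq> simplices X"
  by (auto simp: gen_iff simplices_def intro: s_act)

lemma gen_trans:
  assumes x: "x \<in> X n" and t: "\<tau> \<in> generated act (n,x)"
  shows "generated act \<tau> \<subseteq> generated act (n,x)"
proof
  fix \<sigma> assume s: "\<sigma> \<in> generated act \<tau>"
  from t obtain \<theta> where th: "mono_map (fst \<tau>) n \<theta>" "snd \<tau> = act (fst \<tau>) n \<theta> x"
    by (auto simp: gen_iff)
  have "\<tau> = (fst \<tau>, act (fst \<tau>) n \<theta> x)" using th by (cases \<tau>) auto
  with s obtain \<psi> where ps: "mono_map (fst \<sigma>) (fst \<tau>) \<psi>" "snd \<sigma> = act (fst \<sigma>) (fst \<tau>) \<psi> (act (fst \<tau>) n \<theta> x)"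
    by (metis gen_iff)
  then have "snd \<sigma> = act (fst \<sigma>) n (\<theta> \<circ> \<psi>) x" using s_comp th x by simp
  then show "\<sigma> \<in> generated act (n,x)" using mono_comp[OF ps(1) th(1)] by (auto simp: gen_iff)
qed

lemma vert_gen: "i \<le> n \<Longrightarrow> (0, act 0 n (\<lambda>_. i) x) \<in> generated act (n,x)"
  by (auto simp: gen_iff intro: mono_const)

lemma nd_exists:
  "x \<in> X n \<Longrightarrow> \<exists>n' y \<theta>. y \<in> X n' \<and> \<not> degenerate X act n' y \<and> mono_map n n' \<theta> \<and> x = act n n' \<theta> y"
proof (induction n arbitrary: x rule: less_induct)
  case (less n)
  show ?case
  proof (cases "degenerate X act n x")
    case False
    then show ?thesis using less.prems s_id[OF less.prems] mono_id by metis
  next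
    case True
    then obtain m \<theta> z where m: "m < n" "mono_map n m \<theta>" "z \<in> X m" "x = act n m \<theta> z"
      unfolding degenerate_def by blast
    from less.IH[OF m(1) m(3)] obtain n' y \<theta>' where y: "y \<in> X n'" "\<not> degenerate X act n' y"
      "mono_map m n' \<theta>'" "z = act m n' \<theta>' y" by blast
    have "x = act n n' (\<theta>' \<circ> \<theta>) y" using m y s_comp by simp
    then show ?thesis using y mono_comp[OF m(2) y(3)] by blast
  qed
qed

lemma pigeon:
  assumes "mono_map m n' \<theta>" "n' < m"
  shows "\<exists>j<m. \<theta> j = \<theta> (Suc j)"
proof (rule ccontr)
  assume "\<not> ?thesis"
  then have lt: "\<And>j. j < m \<Longrightarrow> \<theta> j < \<theta> (Suc j)"
    using assms(1) unfolding mono_map_def by (metis Suc_leI le_SucI le_neq_implies_less order_refl)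
  have "i \<le> m \<Longrightarrow> i \<le> \<theta> i" for i
  proof (induction i)
    case 0 then show ?case by simp
  next
    case (Suc i) then show ?case using lt[of i] by simp
  qed
  then have "m \<le> \<theta> m" by simp
  moreover have "\<theta> m \<le> n'" using assms(1) unfolding mono_map_def by simp
  ultimately show False using assms(2) by simp
qed

lemma nd_dim:
  assumes y: "y \<in> X n'" and th: "mono_map m n' \<theta>" and nd: "\<not> degenerate X act m (act m n' \<theta> y)"
  shows "m \<le> n'"
proof (rule ccontr)
  assume "\<not> m \<le> n'"
  then have mn: "n' < m" by simp
  obtain j where j: "j < m" "\<theta> j = \<theta> (Suc j)" using pigeon[OF th mn] by blast
  define s where "s = (\<lambda>i::nat. if i \<le> j then i else i - 1)"
  define \<delta> where "\<delta> = (\<lambda>i::nat. if i \<le> j then i else Suc i)"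
  have ms: "mono_map m (m - 1) s" unfolding mono_map_def s_def using j by auto
  have md: "mono_map (m - 1) m \<delta>" unfolding mono_map_def \<delta>_def using j by auto
  have mtd: "mono_map (m - 1) n' (\<theta> \<circ> \<delta>)" by (rule mono_comp[OF md th])
  have eq: "\<And>i. i \<le> m \<Longrightarrow> \<theta> i = ((\<theta> \<circ> \<delta>) \<circ> s) i"
  proof -
    fix i assume "i \<le> m"
    show "\<theta> i = ((\<theta> \<circ> \<delta>) \<circ> s) i"
    proof (cases "i \<le> j")
      case True then show ?thesis by (simp add: s_def \<delta>_def)
    next
      case False
      then show ?thesis using j by (cases "i = Suc j") (auto simp: s_def \<delta>_def)
    qed
  qed
  have "act m n' \<theta> y = act m n' ((\<theta> \<circ> \<delta>) \<circ> s) y" by (rule s_cong[OF th eq y])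
  also have "\<dots> = act m (m - 1) s (act (m - 1) n' (\<theta> \<circ> \<delta>) y)"
    using s_comp[OF ms mtd y] by simp
  finally have "degenerate X act m (act m n' \<theta> y)"
    unfolding degenerate_def using ms s_act[OF mtd y] mn by (metis diff_less zero_less_one le_less_trans zero_le)
  then show False using nd by simp
qed

lemma finite_nd_faces:
  assumes y: "y \<in> X n'"
  shows "finite {\<tau> \<in> generated act (n',y). \<not> degenerate X act (fst \<tau>) (snd \<tau>)}"
proof -
  let ?A = "SIGMA m:{..n'}. PiE {..m} (\<lambda>_. {..n'})"
  have fin: "finite ?A" by (intro finite_SigmaI finite_PiE) auto
  have "{\<tau> \<in> generated act (n',y). \<not> degenerate X act (fst \<tau>) (snd \<tau>)} \<subseteq> (\<lambda>(m,f). (m, act m n' f y)) ` ?A"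
  proof
    fix \<tau> assume t: "\<tau> \<in> {\<tau> \<in> generated act (n',y). \<not> degenerate X act (fst \<tau>) (snd \<tau>)}"
    then obtain \<theta> where th: "mono_map (fst \<tau>) n' \<theta>" "snd \<tau> = act (fst \<tau>) n' \<theta> y"
      by (auto simp: gen_iff)
    have le: "fst \<tau> \<le> n'" using nd_dim[OF y th(1)] t th(2) by simp
    have r: "restrict \<theta> {..fst \<tau>} \<in> PiE {..fst \<tau>} (\<lambda>_. {..n'})" using th(1) unfolding mono_map_def by auto
    have "act (fst \<tau>) n' \<theta> y = act (fst \<tau>) n' (restrict \<theta> {..fst \<tau>}) y"
      by (rule s_cong[OF th(1) _ y]) auto
    then have "\<tau> = (\<lambda>(m,f). (m, act m n' f y)) (fst \<tau>, restrict \<theta> {..fst \<tau>})"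
      using th(2) by (cases \<tau>) auto
    then show "\<tau> \<in> (\<lambda>(m,f). (m, act m n' f y)) ` ?A" using le r by blast
  qed
  then show ?thesis using fin finite_subset by blast
qed

end


lemma sum_regroup:
  fixes m :: nat and \<theta> :: "nat \<Rightarrow> nat"
  assumes "finite S"
  shows "(\<Sum>i\<in>S. \<Sum>j\<in>{j. j \<le> m \<and> \<theta> j = i}. f j) = (\<Sum>j\<in>{j. j \<le> m \<and> \<theta> j \<in> S}. (f j :: ipoly))"
proof -
  have "(\<Sum>j\<in>{j. j \<le> m \<and> \<theta> j \<in> S}. f j) = (\<Sum>i\<in>S. \<Sum>j\<in>{x \<in> {j. j \<le> m \<and> \<theta> j \<in> S}. \<theta> x = i}. f j)"
  proof (rule sum.group[symmetric])
    show "finite {j. j \<le> m \<and> \<theta> j \<in> S}" by (rule finite_subset[of _ "{..m}"]) auto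
  qed (auto simp: assms)
  also have "\<dots> = (\<Sum>i\<in>S. \<Sum>j\<in>{j. j \<le> m \<and> \<theta> j = i}. f j)"
    by (intro sum.cong refl) auto
  finally show ?thesis by simp
qed

theorem proposition9p7:
  fixes X :: "nat \<Rightarrow> 'a set" and act :: "nat \<Rightarrow> nat \<Rightarrow> (nat \<Rightarrow> nat) \<Rightarrow> 'a \<Rightarrow> 'a"
    and F :: "(nat \<Rightarrow> 'a \<Rightarrow> ipoly) set"
  assumes "simplicial_set X act"
    and "locally_finite X act"
    and "finite F"
    and "F \<subseteq> Zpow_fin X act"
  shows "\<exists>\<mu>\<in>Zpow_fin X act. \<forall>\<phi>\<in>F. \<forall>n. \<forall>x\<in>X n.
           delta_eq n (\<phi> n x * \<mu> n x) (\<phi> n x) \<and> delta_eq n (\<mu> n x * \<phi> n x) (\<phi> n x)"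
proof -
  note ss = assms(1)
  define V where "V = {y. \<exists>\<phi>\<in>F. (0,y) \<in> support X act \<phi>}"
  define S where "S = (\<lambda>n x. {i. i \<le> n \<and> act 0 n (\<lambda>_. i) x \<in> V})"
  define \<mu> where "\<mu> = (\<lambda>n x. \<Sum>i\<in>S n x. pvar i)"
  have finS: "finite (S n x)" for n x unfolding S_def by (rule finite_subset[of _ "{..n}"]) auto
  have supp_simp: "support X act \<phi> \<subseteq> simplices X" for \<phi>
    unfolding support_def using gen_simplices[OF ss] by (auto simp: simplices_def)
  have VX: "V \<subseteq> X 0" using supp_simp unfolding V_def by (auto simp: simplices_def)
  have finV: "finite V"
  proof -
    have "V \<subseteq> (\<Union>\<phi>\<in>F. snd ` {\<sigma>\<in>support X act \<phi>. \<not> degenerate X act (fst \<sigma>) (snd \<sigma>)})"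
    proof
      fix y assume "y \<in> V"
      then obtain \<phi> where "\<phi> \<in> F" "(0,y) \<in> support X act \<phi>" unfolding V_def by blast
      moreover have "\<not> degenerate X act 0 y" unfolding degenerate_def by simp
      ultimately show "y \<in> (\<Union>\<phi>\<in>F. snd ` {\<sigma>\<in>support X act \<phi>. \<not> degenerate X act (fst \<sigma>) (snd \<sigma>)})"
        by force
    qed
    moreover have "finite (\<Union>\<phi>\<in>F. snd ` {\<sigma>\<in>support X act \<phi>. \<not> degenerate X act (fst \<sigma>) (snd \<sigma>)})"
      using assms(3,4) unfolding Zpow_fin_def by auto
    ultimately show ?thesis using finite_subset by blast
  qed
  have mu_pu: "\<mu> n x \<in> polys_upto n" for n x
    unfolding \<mu>_def by (rule pu_sum) (auto simp: S_def intro: pu_var)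
  have mu_compat: "\<mu> m (act m n \<theta> x) = delta_pull m \<theta> (\<mu> n x)"
    if th: "mono_map m n \<theta>" and x: "x \<in> X n" for m n \<theta> x
  proof -
    have "delta_pull m \<theta> (\<mu> n x) = (\<Sum>i\<in>S n x. \<Sum>j\<in>{j. j \<le> m \<and> \<theta> j = i}. pvar j)"
      unfolding delta_pull_def \<mu>_def by (rule psubst_sum_pvar[OF finS])
    also have "\<dots> = (\<Sum>j\<in>{j. j \<le> m \<and> \<theta> j \<in> S n x}. pvar j)"
      by (rule sum_regroup[OF finS])
    also have "{j. j \<le> m \<and> \<theta> j \<in> S n x} = S m (act m n \<theta> x)"
    proof -
      have "act 0 m (\<lambda>_. j) (act m n \<theta> x) = act 0 n (\<lambda>_. \<theta> j) x" if "j \<le> m" for j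
        using s_comp[OF ss mono_const[OF that] th x] by (simp add: comp_def)
      moreover have "j \<le> m \<Longrightarrow> \<theta> j \<le> n" for j using th unfolding mono_map_def by simp
      ultimately show ?thesis unfolding S_def by auto
    qed
    finally show ?thesis unfolding \<mu>_def by simp
  qed
  have muZ: "\<mu> \<in> Zpow X act"
    unfolding Zpow_def using mu_pu mu_compat
    by (auto simp: delta_eq_def intro!: bexI[of _ 0] pu_zero)
  have fin_mu: "finite {\<sigma>\<in>support X act \<mu>. \<not> degenerate X act (fst \<sigma>) (snd \<sigma>)}"
  proof -
    define LF where "LF = (\<lambda>v. {\<tau>\<in>simplices X. \<not> degenerate X act (fst \<tau>) (snd \<tau>) \<and>
                                  generated act (0,v) \<subseteq> generated act \<tau>})"
    have "{\<sigma>\<in>support X act \<mu>. \<not> degenerate X act (fst \<sigma>) (snd \<sigma>)} \<subseteq>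
       (\<Union>v\<in>V. \<Union>\<tau>\<in>LF v. {\<sigma> \<in> generated act \<tau>. \<not> degenerate X act (fst \<sigma>) (snd \<sigma>)})"
    proof
      fix \<sigma> assume "\<sigma> \<in> {\<sigma>\<in>support X act \<mu>. \<not> degenerate X act (fst \<sigma>) (snd \<sigma>)}"
      then have snd: "\<not> degenerate X act (fst \<sigma>) (snd \<sigma>)" and "\<sigma> \<in> support X act \<mu>" by auto
      then obtain n x where x: "x \<in> X n" "\<not> delta_eq n (\<mu> n x) 0" "\<sigma> \<in> generated act (n,x)"
        unfolding support_def simplices_def by auto
      have "S n x \<noteq> {}"
      proof
        assume "S n x = {}"
        then have "\<mu> n x = 0" unfolding \<mu>_def by simp
        then show False using x(2) pu_zero by (auto simp: delta_eq_def)
      qed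
      then obtain i where i: "i \<le> n" "act 0 n (\<lambda>_. i) x \<in> V" unfolding S_def by auto
      obtain n' y \<theta> where y: "y \<in> X n'" "\<not> degenerate X act n' y" "mono_map n n' \<theta>" "x = act n n' \<theta> y"
        using nd_exists[OF ss x(1)] by blast
      have xin: "(n,x) \<in> generated act (n',y)" using y by (auto simp: gen_iff)
      have sub: "generated act (n,x) \<subseteq> generated act (n',y)" by (rule gen_trans[OF ss y(1) xin])
      have "(0, act 0 n (\<lambda>_. i) x) \<in> generated act (n',y)" using vert_gen[OF ss i(1)] sub by blast
      then have "generated act (0, act 0 n (\<lambda>_. i) x) \<subseteq> generated act (n',y)"
        by (rule gen_trans[OF ss y(1)])
      then have "(n',y) \<in> LF (act 0 n (\<lambda>_. i) x)" unfolding LF_def using y by (auto simp: simplices_def)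
      then show "\<sigma> \<in> (\<Union>v\<in>V. \<Union>\<tau>\<in>LF v. {\<sigma> \<in> generated act \<tau>. \<not> degenerate X act (fst \<sigma>) (snd \<sigma>)})"
        using i(2) x(3) sub snd by blast
    qed
    moreover have "finite (\<Union>v\<in>V. \<Union>\<tau>\<in>LF v. {\<sigma> \<in> generated act \<tau>. \<not> degenerate X act (fst \<sigma>) (snd \<sigma>)})"
    proof (intro finite_UN_I finV)
      fix v assume v: "v \<in> V"
      then have "(0,v) \<in> simplices X" using VX by (auto simp: simplices_def)
      then show "finite (LF v)" using assms(2) unfolding locally_finite_def LF_def by blast
      fix \<tau> assume "\<tau> \<in> LF v"
      then obtain n' y where "\<tau> = (n',y)" "y \<in> X n'" unfolding LF_def simplices_def by auto
      then show "finite {\<sigma> \<in> generated act \<tau>. \<not> degenerate X act (fst \<sigma>) (snd \<sigma>)}"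
        using finite_nd_faces[OF ss] by simp
    qed
    ultimately show ?thesis using finite_subset by blast
  qed
  have muF: "\<mu> \<in> Zpow_fin X act" unfolding Zpow_fin_def using muZ fin_mu by simp
  have key: "delta_eq n (\<phi> n x * \<mu> n x) (\<phi> n x)" if phi: "\<phi> \<in> F" and x: "x \<in> X n" for \<phi> n x
  proof (cases "delta_eq n (\<phi> n x) 0")
    case False
    have phiZ: "\<phi> \<in> Zpow X act" using phi assms(4) unfolding Zpow_fin_def by auto
    then have pp: "\<phi> n x \<in> polys_upto n" using x unfolding Zpow_def by auto
    have "(n,x) \<in> support X act \<phi>" unfolding support_def using False x
      by (auto simp: simplices_def gen_iff intro!: bexI[of _ "(n,x)"] exI[of _ id] mono_id s_id[OF ss, symmetric])
    then have "S n x = {..n}"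
    proof -
      assume sup: "(n,x) \<in> support X act \<phi>"
      have "act 0 n (\<lambda>_. i) x \<in> V" if "i \<le> n" for i
      proof -
        obtain \<sigma> where "\<sigma> \<in> simplices X" "\<not> delta_eq (fst \<sigma>) (\<phi> (fst \<sigma>) (snd \<sigma>)) 0" "(n,x) \<in> generated act \<sigma>"
          using sup unfolding support_def by blast
        moreover then have "(0, act 0 n (\<lambda>_. i) x) \<in> generated act \<sigma>"
          using gen_trans[OF ss, of "snd \<sigma>" "fst \<sigma>" "(n,x)"] vert_gen[OF ss that, of x]
          by (cases \<sigma>) (auto simp: simplices_def)
        ultimately have "(0, act 0 n (\<lambda>_. i) x) \<in> support X act \<phi>" unfolding support_def by blast
        then show ?thesis unfolding V_def using phi by blast
      qed
      then show ?thesis unfolding S_def by auto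
    qed
    then have "\<mu> n x = simplex_rel n + 1" unfolding \<mu>_def simplex_rel_def by simp
    then have "\<phi> n x * \<mu> n x - \<phi> n x = \<phi> n x * simplex_rel n" by (simp add: algebra_simps)
    then show ?thesis unfolding delta_eq_def using pp by blast
  next
    case True
    then obtain r where r: "r \<in> polys_upto n" "\<phi> n x = r * simplex_rel n" unfolding delta_eq_def by auto
    have "\<phi> n x * \<mu> n x - \<phi> n x = (r * \<mu> n x - r) * simplex_rel n" using r(2) by (simp add: algebra_simps)
    moreover have "r * \<mu> n x - r \<in> polys_upto n" using r(1) mu_pu by (intro pu_diff pu_mult)
    ultimately show ?thesis unfolding delta_eq_def by blast
  qed
  show ?thesis using muF key by (auto simp: mult.commute intro!: bexI[of _ \<mu>])
qed

end
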